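(* Let $(p(n))_{n\ge1}$ and $(q(n))_{n\ge1}$ be nonnegative sequences in $\ell^1$ and let $(g(n))_{n\ge1}$ be a real sequence. Suppose $p(1)\le g(1)$ and $$p(i)\le\sum_{j=1}^{i-1}q(i-j)p(j)+g(i)\qquad\text{for all } i\ge2 .$$ Define $q^{*1}=q$ and, for $k\ge2$, $q^{*k}(i)=\sum_{m=1}^{i-1}q^{*(k-1)}(m)\,q(i-m)$, and $Q(i)=\sum_{k=1}^\infty q^{*k}(i)$. Then $$p(i)\le\sum_{j=1}^{i-1}Q(i-j)g(j)+g(i)\qquad\text{for all } i\ge2 .$$ *)

theory Defs
  imports Complex_Main
begin

text \<open>Sequences indexed by n \<ge> 1 are modelled as functions nat \<Rightarrow> real; the value at 0 is ignored.
  conv_pow q k i is the k-fold convolution power q^{*k}(i) (k \<ge> 1):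
  q^{*1} = q, q^{*k}(i) = sum over m = 1..i-1 of q^{*(k-1)}(m) q(i-m).\<close>

fun conv_pow :: "(nat \<Rightarrow> real) \<Rightarrow> nat \<Rightarrow> nat \<Rightarrow> real" where
  "conv_pow q 0 i = 0"
| "conv_pow q (Suc 0) i = q i"
| "conv_pow q (Suc (Suc k)) i = (\<Sum>m = 1..<i. conv_pow q (Suc k) m * q (i - m))"

definition Qsum :: "(nat \<Rightarrow> real) \<Rightarrow> nat \<Rightarrow> real" where
  "Qsum q i = (\<Sum>k. conv_pow q (Suc k) i)"

end

theory Submission
  imports Defs
begin

lemma conv_pow_zero:
  "1 \<le> n \<Longrightarrow> n \<le> k \<Longrightarrow> conv_pow q (Suc k) n = 0"
proof (induction k arbitrary: n)
  case 0 then show ?case by simp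
next
  case (Suc k)
  have "conv_pow q (Suc (Suc k)) n = (\<Sum>m = 1..<n. conv_pow q (Suc k) m * q (n - m))" by simp
  also have "\<dots> = 0"
    by (rule sum.neutral) (use Suc in auto)
  finally show ?case .
qed

lemma Qsum_finite:
  assumes "1 \<le> n" "n \<le> N"
  shows "Qsum q n = (\<Sum>k<N. conv_pow q (Suc k) n)"
  unfolding Qsum_def
  by (rule suminf_finite) (use assms conv_pow_zero in auto)

lemma Qsum_rec:
  assumes "1 \<le> n"
  shows "Qsum q n = q n + (\<Sum>m = 1..<n. Qsum q m * q (n - m))"
proof -
  obtain n' where n: "n = Suc n'" using assms by (cases n) auto
  have "Qsum q n = (\<Sum>k<Suc n'. conv_pow q (Suc k) n)" using Qsum_finite[of n n q] n by simp
  also have "\<dots> = q n + (\<Sum>k<n'. conv_pow q (Suc (Suc k)) n)"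
    unfolding sum.lessThan_Suc_shift by simp
  also have "(\<Sum>k<n'. conv_pow q (Suc (Suc k)) n)
      = (\<Sum>k<n'. \<Sum>m = 1..<n. conv_pow q (Suc k) m * q (n - m))" by simp
  also have "\<dots> = (\<Sum>m = 1..<n. \<Sum>k<n'. conv_pow q (Suc k) m * q (n - m))"
    by (rule sum.swap)
  also have "\<dots> = (\<Sum>m = 1..<n. Qsum q m * q (n - m))"
  proof (rule sum.cong)
    fix m assume "m \<in> {1..<n}"
    then have "Qsum q m = (\<Sum>k<n'. conv_pow q (Suc k) m)" using n by (intro Qsum_finite) auto
    then show "(\<Sum>k<n'. conv_pow q (Suc k) m * q (n - m)) = Qsum q m * q (n - m)"
      by (simp add: sum_distrib_right)
  qed simp
  finally show ?thesis .
qed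

lemma key_identity:
  fixes q g :: "nat \<Rightarrow> real"
  shows "(\<Sum>j = 1..i - 1. q (i - j) * ((\<Sum>l = 1..j - 1. Qsum q (j - l) * g l) + g j))
       = (\<Sum>j = 1..i - 1. Qsum q (i - j) * g j)"
proof -
  have "(\<Sum>j = 1..i - 1. q (i - j) * ((\<Sum>l = 1..j - 1. Qsum q (j - l) * g l) + g j))
     = (\<Sum>j = 1..i - 1. q (i - j) * g j) +
       (\<Sum>j \<in> {1..i - 1}. \<Sum>l \<in> {l \<in> {1..i - 1}. l < j}. q (i - j) * Qsum q (j - l) * g l)"
  proof -
    have "(\<Sum>j = 1..i - 1. q (i - j) * ((\<Sum>l = 1..j - 1. Qsum q (j - l) * g l) + g j))
      = (\<Sum>j = 1..i - 1. q (i - j) * g j + (\<Sum>l \<in> {l \<in> {1..i - 1}. l < j}. q (i - j) * Qsum q (j - l) * g l))"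
    proof (rule sum.cong)
      fix j assume j: "j \<in> {1..i - 1}"
      have "{l \<in> {1..i - 1}. l < j} = {1..j - 1}" using j by auto
      then show "q (i - j) * ((\<Sum>l = 1..j - 1. Qsum q (j - l) * g l) + g j) =
         q (i - j) * g j + (\<Sum>l \<in> {l \<in> {1..i - 1}. l < j}. q (i - j) * Qsum q (j - l) * g l)"
        by (simp add: algebra_simps sum_distrib_left)
    qed simp
    then show ?thesis by (simp add: sum.distrib)
  qed
  also have "(\<Sum>j \<in> {1..i - 1}. \<Sum>l \<in> {l \<in> {1..i - 1}. l < j}. q (i - j) * Qsum q (j - l) * g l)
     = (\<Sum>l \<in> {1..i - 1}. \<Sum>j \<in> {j \<in> {1..i - 1}. l < j}. q (i - j) * Qsum q (j - l) * g l)"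
    by (rule sum.swap_restrict) auto
  also have "\<dots> = (\<Sum>l \<in> {1..i - 1}. (\<Sum>m = 1..<i - l. Qsum q m * q (i - l - m)) * g l)"
  proof (rule sum.cong)
    fix l assume l: "l \<in> {1..i - 1}"
    have img: "{j \<in> {1..i - 1}. l < j} = (\<lambda>m. m + l) ` {1..<i - l}"
    proof
      show "{j \<in> {1..i - 1}. l < j} \<subseteq> (\<lambda>m. m + l) ` {1..<i - l}"
      proof
        fix j assume "j \<in> {j \<in> {1..i - 1}. l < j}"
        then have "j = (j - l) + l" "j - l \<in> {1..<i - l}" by auto
        then show "j \<in> (\<lambda>m. m + l) ` {1..<i - l}" by blast
      qed
    qed auto
    have "(\<Sum>j \<in> {j \<in> {1..i - 1}. l < j}. q (i - j) * Qsum q (j - l) * g l)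
        = (\<Sum>m \<in> {1..<i - l}. q (i - (m + l)) * Qsum q (m + l - l) * g l)"
      unfolding img by (subst sum.reindex) (auto simp: inj_on_def)
    also have "\<dots> = (\<Sum>m = 1..<i - l. Qsum q m * q (i - l - m)) * g l"
      by (simp add: sum_distrib_right diff_diff_add add.commute mult_ac sum_distrib_left[symmetric])
    finally show "(\<Sum>j \<in> {j \<in> {1..i - 1}. l < j}. q (i - j) * Qsum q (j - l) * g l)
        = (\<Sum>m = 1..<i - l. Qsum q m * q (i - l - m)) * g l" .
  qed simp
  finally have "(\<Sum>j = 1..i - 1. q (i - j) * ((\<Sum>l = 1..j - 1. Qsum q (j - l) * g l) + g j))
     = (\<Sum>j = 1..i - 1. (q (i - j) + (\<Sum>m = 1..<i - j. Qsum q m * q (i - j - m))) * g j)"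
    by (simp add: sum.distrib algebra_simps)
  also have "\<dots> = (\<Sum>j = 1..i - 1. Qsum q (i - j) * g j)"
    by (rule sum.cong) (auto simp: Qsum_rec)
  finally show ?thesis .
qed

theorem mainTheorem3:
  fixes p q g :: "nat \<Rightarrow> real"
  assumes p_nonneg: "\<forall>n\<ge>1. p n \<ge> 0"
    and q_nonneg: "\<forall>n\<ge>1. q n \<ge> 0"
    and p_l1: "summable (\<lambda>n. p (n + 1))"
    and q_l1: "summable (\<lambda>n. q (n + 1))"
    and base: "p 1 \<le> g 1"
    and rec: "\<forall>i\<ge>2. p i \<le> (\<Sum>j = 1..i - 1. q (i - j) * p j) + g i"
  shows "\<forall>i\<ge>2. p i \<le> (\<Sum>j = 1..i - 1. Qsum q (i - j) * g j) + g i"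
proof -
  define B where "B i = (\<Sum>j = 1..i - 1. Qsum q (i - j) * g j) + g i" for i
  have "p i \<le> B i" if "i \<ge> 1" for i
    using that
  proof (induction i rule: less_induct)
    case (less i)
    show ?case
    proof (cases "i = 1")
      case True then show ?thesis using base by (simp add: B_def)
    next
      case False
      then have i2: "i \<ge> 2" using less.prems by auto
      have "p i \<le> (\<Sum>j = 1..i - 1. q (i - j) * p j) + g i" using rec i2 by auto
      also have "(\<Sum>j = 1..i - 1. q (i - j) * p j) \<le> (\<Sum>j = 1..i - 1. q (i - j) * B j)"
      proof (rule sum_mono)
        fix j assume j: "j \<in> {1..i - 1}"
        then have "p j \<le> B j" using less.IH[of j] by auto
        moreover have "q (i - j) \<ge> 0" using q_nonneg j by auto
        ultimately show "q (i - j) * p j \<le> q (i - j) * B j" by (rule mult_left_mono)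
      qed
      also have "(\<Sum>j = 1..i - 1. q (i - j) * B j) = (\<Sum>j = 1..i - 1. Qsum q (i - j) * g j)"
        unfolding B_def by (rule key_identity)
      finally show ?thesis by (simp add: B_def)
    qed
  qed
  then show ?thesis by (auto simp: B_def)
qed

end
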